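(* Let $(g,f)$ be an impartial deterministic strong sample mechanism on $\mathcal{G}^1_n$. Then the sample set is independent of the nomination profile: there is a set $S$ such that $g(\mathbf{x})=S$ for all $\mathbf{x}\in\mathcal{G}^1_n$.
   Context: $N=\{1,\dots,n\}$. $\mathcal{G}^1_n$ is the set of directed graphs on $N$ without self-loops in which every vertex has out-degree exactly $1$; a profile $\mathbf{x}$ is a tuple with $x_u\in N\setminus\{u\}$ the vertex nominated by $u$, and $(x'_u,\mathbf{x}_{-u})$ denotes the profile where $u$'s vote is changed to $x'_u$. For $S\subseteq N$, $W_S(\mathbf{x})=\{w\in N\setminus S:\ (v,w)\text{ is an edge for some } v\in S\}$. A sample mechanism $(g,f)$ first selects a sample set $g(\mathbf{x})$ using a function $g:\mathcal{G}^1_n\to 2^N\setminus\{\emptyset\}$ and then applies a (possibly randomized) selection rule $f$ whose range is restricted to $W_{g(\mathbf{x})}(\mathbf{x})$ (no winner if this set is empty). The sample mechanism is called deterministic if $g$ uses no randomization (and randomized if $g$ selects $S$ randomly). It is a strong sample mechanism if $g(x'_u,\mathbf{x}_{-u})=g(\mathbf{x})$ for all $\mathbf{x}$, all $u\in g(\mathbf{x})$ and all $x'_u\in N\setminus\{u\}$. The mechanism is impartial if for every profile $\mathbf{x}$, every vertex $u$ and every $x'_u\in N\setminus\{u\}$, the probability that $u$ is selected as winner is the same under $\mathbf{x}$ and $(x'_u,\mathbf{x}_{-u})$. *)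

theory Defs
  imports "HOL-Probability.Probability_Mass_Function" "HOL-Library.FuncSet"
begin

definition voters :: "nat \<Rightarrow> nat set" where
  "voters n = {1..n}"

definition profiles :: "nat \<Rightarrow> (nat \<Rightarrow> nat) set" where
  "profiles n = (\<Pi>\<^sub>E u\<in>voters n. voters n - {u})"

definition W_set :: "nat \<Rightarrow> nat set \<Rightarrow> (nat \<Rightarrow> nat) \<Rightarrow> nat set" where
  "W_set n S x = {w \<in> voters n - S. \<exists>v\<in>S. x v = w}"

text \<open>A (possibly randomized) sample mechanism (g,f): g deterministic, f x is a distribution
  over winners (None = no winner), supported on W_{g x}(x), and no winner iff that set is empty.\<close>
definition sample_mechanism ::
  "nat \<Rightarrow> ((nat \<Rightarrow> nat) \<Rightarrow> nat set) \<Rightarrow> ((nat \<Rightarrow> nat) \<Rightarrow> nat option pmf) \<Rightarrow> bool" where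
  "sample_mechanism n g f \<longleftrightarrow>
     (\<forall>x\<in>profiles n. g x \<noteq> {} \<and> g x \<subseteq> voters n \<and>
        (if W_set n (g x) x = {} then f x = return_pmf None
         else set_pmf (f x) \<subseteq> Some ` W_set n (g x) x))"

definition strong_sample :: "nat \<Rightarrow> ((nat \<Rightarrow> nat) \<Rightarrow> nat set) \<Rightarrow> bool" where
  "strong_sample n g \<longleftrightarrow>
     (\<forall>x\<in>profiles n. \<forall>u\<in>g x. \<forall>v\<in>voters n - {u}. g (x(u := v)) = g x)"

definition impartial :: "nat \<Rightarrow> ((nat \<Rightarrow> nat) \<Rightarrow> nat option pmf) \<Rightarrow> bool" where
  "impartial n f \<longleftrightarrow>
     (\<forall>x\<in>profiles n. \<forall>u\<in>voters n. \<forall>v\<in>voters n - {u}.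
        pmf (f x) (Some u) = pmf (f (x(u := v))) (Some u))"

end

theory Submission
  imports Defs
begin

definition iota :: "nat set \<Rightarrow> nat \<Rightarrow> nat" where
  "iota S u = (SOME w. w \<in> S \<and> w \<noteq> u)"

lemma iota: "u \<in> S \<Longrightarrow> s \<in> S \<Longrightarrow> s \<noteq> u \<Longrightarrow> iota S u \<in> S \<and> iota S u \<noteq> u"
  unfolding iota_def by (rule someI[of _ s]) auto

definition des :: "nat set \<Rightarrow> (nat \<Rightarrow> nat) \<Rightarrow> nat \<Rightarrow> nat \<Rightarrow> nat \<Rightarrow> nat" where
  "des S x v s = (\<lambda>u. if u \<in> S then (if u = s then v else iota S u) else x u)"

definition reach :: "(nat \<Rightarrow> nat) \<Rightarrow> nat set \<Rightarrow> nat \<Rightarrow> bool" where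
  "reach z S v = (\<exists>k. (z ^^ k) v \<in> S)"

definition bad :: "nat \<Rightarrow> (nat \<Rightarrow> nat) \<Rightarrow> nat set \<Rightarrow> nat set" where
  "bad n z S = {v \<in> voters n. \<not> reach z S v}"

locale SM =
  fixes n :: nat and g :: "(nat \<Rightarrow> nat) \<Rightarrow> nat set" and f :: "(nat \<Rightarrow> nat) \<Rightarrow> nat option pmf"
  assumes sm: "sample_mechanism n g f" and st: "strong_sample n g" and imp: "impartial n f"
begin

abbreviation "N \<equiv> voters n"
abbreviation "P \<equiv> profiles n"

lemma finN: "finite N" unfolding voters_def by simp

lemma prof_val: "x \<in> P \<Longrightarrow> u \<in> N \<Longrightarrow> x u \<in> N \<and> x u \<noteq> u"
proof -
  assume x: "x \<in> P" and u: "u \<in> N"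
  have "x u \<in> N - {u}" using PiE_mem[OF x[unfolded profiles_def] u] .
  thus ?thesis by simp
qed

lemma prof_out: "x \<in> P \<Longrightarrow> u \<notin> N \<Longrightarrow> x u = undefined"
proof -
  assume x: "x \<in> P" and u: "u \<notin> N"
  show ?thesis using PiE_arb[OF x[unfolded profiles_def] u] .
qed

lemma prof_intro: "(\<And>u. u \<in> N \<Longrightarrow> x u \<in> N \<and> x u \<noteq> u) \<Longrightarrow> (\<And>u. u \<notin> N \<Longrightarrow> x u = undefined) \<Longrightarrow> x \<in> P"
  unfolding profiles_def by auto

lemma prof_upd: "x \<in> P \<Longrightarrow> u \<in> N \<Longrightarrow> v \<in> N \<Longrightarrow> v \<noteq> u \<Longrightarrow> x(u:=v) \<in> P"
  by (rule prof_intro) (auto dest: prof_val prof_out)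

lemma g_sub: "x \<in> P \<Longrightarrow> g x \<subseteq> N"
  using sm unfolding sample_mechanism_def by blast

lemma g_ne: "x \<in> P \<Longrightarrow> g x \<noteq> {}"
  using sm unfolding sample_mechanism_def by blast

lemma strong: "x \<in> P \<Longrightarrow> u \<in> g x \<Longrightarrow> v \<in> N \<Longrightarrow> v \<noteq> u \<Longrightarrow> g (x(u:=v)) = g x"
  using st unfolding strong_sample_def by blast

lemma L0_aux:
  assumes x: "x \<in> P"
  shows "\<forall>y. y \<in> P \<longrightarrow> (\<forall>u. u \<notin> g x \<longrightarrow> y u = x u) \<longrightarrow> card {u\<in>N. y u \<noteq> x u} = k \<longrightarrow> g y = g x"
proof (induction k)
  case 0
  show ?case
  proof (intro allI impI)
    fix y assume y: "y \<in> P" and ag: "\<forall>u. u \<notin> g x \<longrightarrow> y u = x u" and c: "card {u\<in>N. y u \<noteq> x u} = 0"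
    have "{u\<in>N. y u \<noteq> x u} = {}" using c finN by simp
    have "y = x"
    proof (rule ext)
      fix w show "y w = x w"
        using \<open>{u\<in>N. y u \<noteq> x u} = {}\<close> prof_out[OF y, of w] prof_out[OF x, of w] by (cases "w \<in> N") auto
    qed
    thus "g y = g x" by simp
  qed
next
  case (Suc k)
  show ?case
  proof (intro allI impI)
    fix y assume y: "y \<in> P" and ag: "\<forall>u. u \<notin> g x \<longrightarrow> y u = x u" and c: "card {u\<in>N. y u \<noteq> x u} = Suc k"
    then obtain u where u: "u \<in> N" "y u \<noteq> x u" by (metis (mono_tags, lifting) card.empty empty_Collect_eq nat.distinct(1))
    have ug: "u \<in> g x" using ag u by blast
    define y' where "y' = y(u := x u)"
    have y'P: "y' \<in> P" unfolding y'_def using prof_upd[OF y u(1)] prof_val[OF x u(1)] by blast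
    have "{w\<in>N. y' w \<noteq> x w} = {w\<in>N. y w \<noteq> x w} - {u}" unfolding y'_def by auto
    hence "card {w\<in>N. y' w \<noteq> x w} = k" using c u finN by (simp add: card_Diff_singleton)
    moreover have "\<forall>w. w \<notin> g x \<longrightarrow> y' w = x w" using ag unfolding y'_def by auto
    ultimately have gy': "g y' = g x" using Suc.IH y'P by blast
    have "y = y'(u := y u)" unfolding y'_def by simp
    moreover have "g (y'(u := y u)) = g y'" using strong[OF y'P] ug gy' prof_val[OF y u(1)] by simp
    ultimately show "g y = g x" using gy' by simp
  qed
qed

lemma L0: "x \<in> P \<Longrightarrow> y \<in> P \<Longrightarrow> (\<And>u. u \<notin> g x \<Longrightarrow> y u = x u) \<Longrightarrow> g y = g x"
  using L0_aux by blast

lemma L1: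
  assumes x: "x \<in> P" and y: "y \<in> P" and ag: "\<And>u. u \<notin> g x \<Longrightarrow> u \<notin> g y \<Longrightarrow> x u = y u"
  shows "g x = g y"
proof -
  define h where "h = (\<lambda>u. if u \<in> g x - g y then y u else x u)"
  have hP: "h \<in> P"
  proof (rule prof_intro)
    fix u assume "u \<in> N" thus "h u \<in> N \<and> h u \<noteq> u" unfolding h_def using prof_val[OF x] prof_val[OF y] by auto
  next
    fix u assume "u \<notin> N" thus "h u = undefined" unfolding h_def using prof_out[OF x] prof_out[OF y] by auto
  qed
  have "g h = g x" by (rule L0[OF x hP]) (auto simp: h_def)
  moreover have "g h = g y" by (rule L0[OF y hP]) (auto simp: h_def ag)
  ultimately show ?thesis by simp
qed

lemma sm': "x \<in> P \<Longrightarrow> (if W_set n (g x) x = {} then f x = return_pmf None else set_pmf (f x) \<subseteq> Some ` W_set n (g x) x)"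
  using sm unfolding sample_mechanism_def by blast

lemma imp': "x \<in> P \<Longrightarrow> u \<in> N \<Longrightarrow> c \<in> N \<Longrightarrow> c \<noteq> u \<Longrightarrow> pmf (f x) (Some u) = pmf (f (x(u:=c))) (Some u)"
proof -
  assume a: "x \<in> P" "u \<in> N" "c \<in> N" "c \<noteq> u"
  hence "c \<in> N - {u}" by simp
  thus ?thesis using imp a(1,2) unfolding impartial_def by blast
qed

lemma Force:
  assumes x: "x \<in> P" and W: "W_set n (g x) x = {v}" and c: "c \<in> N" "c \<noteq> v"
  shows "v \<in> W_set n (g (x(v:=c))) (x(v:=c))"
proof -
  have vN: "v \<in> N" using W unfolding W_set_def by blast
  have x'P: "x(v:=c) \<in> P" using prof_upd[OF x vN c(1)] c(2) by blast
  have "set_pmf (f x) \<subseteq> Some ` {v}" using sm'[OF x] W by simp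
  hence "set_pmf (f x) \<subseteq> {Some v}" by simp
  hence "f x = return_pmf (Some v)" using set_pmf_subset_singleton[of "f x" "Some v"] by simp
  hence "pmf (f x) (Some v) = 1" by simp
  hence p1: "pmf (f (x(v:=c))) (Some v) = 1" using imp'[OF x vN c] by simp
  show ?thesis
  proof (cases "W_set n (g (x(v:=c))) (x(v:=c)) = {}")
    case True
    hence "f (x(v:=c)) = return_pmf None" using sm'[OF x'P] by simp
    thus ?thesis using p1 by simp
  next
    case False
    hence "set_pmf (f (x(v:=c))) \<subseteq> Some ` W_set n (g (x(v:=c))) (x(v:=c))"
      using sm'[OF x'P] by simp
    moreover have "Some v \<in> set_pmf (f (x(v:=c)))" using p1 set_pmf_iff by fastforce
    ultimately show ?thesis by auto
  qed
qed

lemma des_P: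
  assumes x: "x \<in> P" and S: "S \<subseteq> N" and v: "v \<in> N" "v \<notin> S" and s: "s \<in> S"
  shows "des S x v s \<in> P"
proof (rule prof_intro)
  fix u assume u: "u \<in> N"
  show "des S x v s u \<in> N \<and> des S x v s u \<noteq> u"
  proof (cases "u \<in> S")
    case True
    show ?thesis
    proof (cases "u = s")
      case True
      hence "des S x v s u = v" using \<open>u \<in> S\<close> by (simp add: des_def)
      thus ?thesis using v \<open>u \<in> S\<close> by metis
    next
      case False
      hence "des S x v s u = iota S u" using \<open>u \<in> S\<close> by (simp add: des_def)
      thus ?thesis using iota[OF \<open>u \<in> S\<close> s] False S by auto
    qed
  next
    case False thus ?thesis using prof_val[OF x u] by (simp add: des_def)
  qed
next
  fix u assume "u \<notin> N"
  hence "u \<notin> S" using S by blast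
  thus "des S x v s u = undefined" using prof_out[OF x \<open>u \<notin> N\<close>] by (simp add: des_def)
qed

lemma des_W:
  assumes S: "S \<subseteq> N" and v: "v \<in> N" "v \<notin> S" and s: "s \<in> S"
  shows "W_set n S (des S x v s) = {v}"
proof
  show "W_set n S (des S x v s) \<subseteq> {v}"
  proof
    fix w assume "w \<in> W_set n S (des S x v s)"
    hence w: "w \<notin> S" "\<exists>u\<in>S. des S x v s u = w" by (simp_all add: W_set_def)
    then obtain u where u: "u \<in> S" "des S x v s u = w" by blast
    show "w \<in> {v}"
    proof (cases "u = s")
      case True
      hence "des S x v s u = v" using u(1) by (simp add: des_def)
      thus ?thesis using u(2) by simp
    next
      case False
      hence "des S x v s u = iota S u" using u(1) by (simp add: des_def)
      hence "w \<in> S" using u iota[OF u(1) s] False by simp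
      thus ?thesis using w(1) by simp
    qed
  qed
next
  have "des S x v s s = v" using s by (simp add: des_def)
  hence "\<exists>u\<in>S. des S x v s u = v" using s by blast
  thus "{v} \<subseteq> W_set n S (des S x v s)" using v by (simp add: W_set_def)
qed

lemma DL:
  assumes x: "x \<in> P" and gx: "g x = S" and v: "v \<in> N" "v \<notin> S" and c: "c \<in> N" "c \<noteq> v" and s: "s \<in> S"
  shows "(des S x v s)(v:=c) \<in> P \<and> v \<notin> g ((des S x v s)(v:=c)) \<and> (\<exists>u\<in>g ((des S x v s)(v:=c)). ((des S x v s)(v:=c)) u = v)"
proof -
  have S: "S \<subseteq> N" using g_sub[OF x] gx by simp
  have dP: "des S x v s \<in> P" using des_P[OF x S v s] .
  have gd: "g (des S x v s) = S" using L0[OF x dP] gx by (auto simp: des_def)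
  have W: "W_set n (g (des S x v s)) (des S x v s) = {v}" using des_W[OF S v s] gd by simp
  have "v \<in> W_set n (g ((des S x v s)(v:=c))) ((des S x v s)(v:=c))" using Force[OF dP W c] .
  moreover have "(des S x v s)(v:=c) \<in> P" using prof_upd[OF dP v(1) c(1)] c(2) by simp
  ultimately show ?thesis unfolding W_set_def by blast
qed

lemma des_vote:
  assumes "((des S x v s)(v:=c)) u = v" and "c \<noteq> v" and "v \<notin> S" and "s \<in> S"
  shows "(u \<in> S \<longrightarrow> u = s) \<and> (u \<notin> S \<longrightarrow> u \<noteq> v \<and> x u = v)"
proof -
  have uv: "u \<noteq> v" using assms(1,2) by auto
  hence d: "des S x v s u = v" using assms(1) by simp
  show ?thesis
  proof (intro conjI impI)
    assume uS: "u \<in> S" show "u = s"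
    proof (rule ccontr)
      assume "u \<noteq> s" thus False using d iota[OF uS assms(4)] assms(3) uS by (auto simp: des_def)
    qed
  next
    show "u \<noteq> v" by (rule uv)
  next
    assume "u \<notin> S" thus "x u = v" using d by (simp add: des_def)
  qed
qed

lemma des_agree: "u \<noteq> s \<Longrightarrow> u \<noteq> s' \<Longrightarrow> ((des S x v s)(v:=c)) u = ((des S x v s')(v:=c)) u"
  by (simp add: des_def)

lemma E_half:
  assumes x: "x \<in> P" and gx: "g x = S" and v: "v \<in> N" "v \<notin> S" and vot: "\<forall>w\<in>N. x w = v \<longrightarrow> w \<in> S"
    and c: "c \<in> N" "c \<noteq> v"
  shows "S \<subseteq> g (x(v:=c)) \<and> v \<notin> g (x(v:=c))"
proof -
  define y where "y = (\<lambda>s. (des S x v s)(v:=c))"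
  have S: "S \<subseteq> N" using g_sub[OF x] gx by simp
  have yP: "\<And>s. s \<in> S \<Longrightarrow> y s \<in> P" using DL[OF x gx v c] unfolding y_def by blast
  have sT: "\<And>s. s \<in> S \<Longrightarrow> s \<in> g (y s) \<and> v \<notin> g (y s)"
  proof -
    fix s assume s: "s \<in> S"
    obtain u where u: "u \<in> g (y s)" "y s u = v" using DL[OF x gx v c s] unfolding y_def by blast
    have uN: "u \<in> N" using u(1) g_sub[OF yP[OF s]] by blast
    have "u = s"
    proof (cases "u \<in> S")
      case True thus ?thesis using des_vote[OF u(2)[unfolded y_def] c(2) v(2) s] by blast
    next
      case False
      hence "x u = v" using des_vote[OF u(2)[unfolded y_def] c(2) v(2) s] by blast
      thus ?thesis using vot uN False by blast
    qed
    thus "s \<in> g (y s) \<and> v \<notin> g (y s)" using u DL[OF x gx v c s] unfolding y_def by blast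
  qed
  have eq: "\<And>s s'. s \<in> S \<Longrightarrow> s' \<in> S \<Longrightarrow> g (y s) = g (y s')"
  proof -
    fix s s' assume s: "s \<in> S" and s': "s' \<in> S"
    show "g (y s) = g (y s')"
    proof (rule L1[OF yP[OF s] yP[OF s']])
      fix u assume "u \<notin> g (y s)" "u \<notin> g (y s')"
      hence "u \<noteq> s" "u \<noteq> s'" using sT s s' by auto
      thus "y s u = y s' u" unfolding y_def by (rule des_agree)
    qed
  qed
  obtain s0 where s0: "s0 \<in> S" using g_ne[OF x] gx by blast
  have ST: "S \<subseteq> g (y s0)" using sT eq s0 by blast
  have x'P: "x(v:=c) \<in> P" using prof_upd[OF x v(1) c(1)] c(2) by simp
  have "g (x(v:=c)) = g (y s0)"
  proof (rule L0[OF yP[OF s0] x'P])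
    fix u assume "u \<notin> g (y s0)"
    hence "u \<notin> S" using ST by blast
    thus "(x(v:=c)) u = y s0 u" unfolding y_def by (simp add: des_def)
  qed
  thus ?thesis using ST sT[OF s0] by simp
qed

lemma LemE:
  assumes x: "x \<in> P" and gx: "g x = S" and v: "v \<in> N" "v \<notin> S" and vot: "\<forall>w\<in>N. x w = v \<longrightarrow> w \<in> S"
    and c: "c \<in> N" "c \<noteq> v"
  shows "g (x(v:=c)) = S"
proof -
  define S' where "S' = g (x(v:=c))"
  have h1: "S \<subseteq> S'" "v \<notin> S'" using E_half[OF assms] unfolding S'_def by auto
  have x'P: "x(v:=c) \<in> P" using prof_upd[OF x v(1) c(1)] c(2) by simp
  have vot': "\<forall>w\<in>N. (x(v:=c)) w = v \<longrightarrow> w \<in> S'"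
  proof (intro ballI impI)
    fix w assume "w \<in> N" "(x(v:=c)) w = v"
    moreover hence "w \<noteq> v" using c by auto
    ultimately show "w \<in> S'" using vot h1 by auto
  qed
  have xv: "x v \<in> N" "x v \<noteq> v" using prof_val[OF x v(1)] by auto
  have "S' \<subseteq> g ((x(v:=c))(v := x v))" using E_half[OF x'P S'_def[symmetric] v(1) h1(2) vot' xv] by blast
  moreover have "(x(v:=c))(v := x v) = x" by simp
  ultimately show ?thesis using h1 gx unfolding S'_def by auto
qed

end

lemma funpow_Suc_app: "(z ^^ Suc k) v = (z ^^ k) (z v)"
  by (simp only: funpow_Suc_right comp_apply)

lemma reach_self: "v \<in> S \<Longrightarrow> reach z S v"
  unfolding reach_def by (rule exI[of _ 0]) simp

lemma reach_step: "reach z S (z v) \<Longrightarrow> reach z S v"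
  unfolding reach_def
proof -
  assume "\<exists>k. (z ^^ k) (z v) \<in> S"
  then obtain k where "(z ^^ k) (z v) \<in> S" by blast
  hence "(z ^^ Suc k) v \<in> S" by (simp only: funpow_Suc_app)
  thus "\<exists>k. (z ^^ k) v \<in> S" by blast
qed

lemma reach_mono_aux:
  assumes ag: "\<forall>u. u \<notin> X \<longrightarrow> z' u = z u" and X: "\<forall>x\<in>X. reach z' S x"
  shows "\<forall>w. (z ^^ k) w \<in> S \<longrightarrow> reach z' S w"
proof (induction k)
  case 0 thus ?case by (simp add: reach_self)
next
  case (Suc k)
  show ?case
  proof (intro allI impI)
    fix w assume "(z ^^ Suc k) w \<in> S"
    hence h: "(z ^^ k) (z w) \<in> S" by (simp only: funpow_Suc_app)
    show "reach z' S w"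
    proof (cases "w \<in> X")
      case True thus ?thesis using X by blast
    next
      case False
      hence "z' w = z w" using ag by blast
      thus ?thesis using Suc.IH h reach_step[of z' S w] by simp
    qed
  qed
qed

lemma reach_mono:
  assumes "\<forall>u. u \<notin> X \<longrightarrow> z' u = z u" "\<forall>x\<in>X. reach z' S x" "reach z S w"
  shows "reach z' S w"
  using reach_mono_aux[OF assms(1,2)] assms(3) unfolding reach_def by blast

definition vdist :: "(nat \<Rightarrow> nat) \<Rightarrow> nat set \<Rightarrow> nat \<Rightarrow> nat" where
  "vdist z S v = (LEAST k. (z ^^ k) v \<in> S)"

lemma vdist_Suc:
  assumes "reach z S v" "v \<notin> S"
  shows "vdist z S v = Suc (vdist z S (z v))"
proof -
  obtain k where k: "(z ^^ k) v \<in> S" using assms(1) unfolding reach_def by blast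
  have "(LEAST k. (z ^^ k) v \<in> S) = Suc (LEAST m. (z ^^ Suc m) v \<in> S)"
    by (rule Least_Suc[of "\<lambda>k. (z ^^ k) v \<in> S", OF k]) (use assms(2) in simp)
  moreover have "\<And>m. (z ^^ Suc m) v = (z ^^ m) (z v)" by (rule funpow_Suc_app)
  ultimately show ?thesis unfolding vdist_def by simp
qed


context SM
begin

lemma bad_sub: "bad n z S \<subseteq> N" unfolding bad_def by blast

lemma bad_fin: "finite (bad n z S)" using finite_subset[OF bad_sub finN] .

lemma bad_notin: "v \<in> bad n z S \<Longrightarrow> v \<notin> S"
  unfolding bad_def using reach_self by blast

lemma bad_closed:
  assumes z: "z \<in> P" and v: "v \<in> bad n z S"
  shows "z v \<in> bad n z S \<and> z v \<noteq> v"
proof -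
  have vN: "v \<in> N" and nr: "\<not> reach z S v" using v unfolding bad_def by auto
  have "\<not> reach z S (z v)" using nr reach_step by blast
  thus ?thesis using prof_val[OF z vN] unfolding bad_def by auto
qed

lemma bad_mono:
  assumes "\<forall>u. u \<notin> X \<longrightarrow> z' u = z u" "\<forall>x\<in>X. reach z' S x"
  shows "bad n z' S \<subseteq> bad n z S"
  unfolding bad_def using reach_mono[OF assms] by blast

lemma bad_less:
  assumes "\<forall>u. u \<notin> X \<longrightarrow> z' u = z u" "\<forall>x\<in>X. reach z' S x" "v \<in> X" "v \<in> bad n z S"
  shows "card (bad n z' S) < card (bad n z S)"
proof -
  have "bad n z' S \<subseteq> bad n z S" using bad_mono[OF assms(1,2)] .
  moreover have "v \<notin> bad n z' S" using assms(2,3) unfolding bad_def by blast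
  ultimately have "bad n z' S \<subset> bad n z S" using assms(4) by blast
  thus ?thesis using psubset_card_mono[OF bad_fin] by blast
qed

lemma bad_eq:
  assumes "\<forall>u. u \<notin> S \<longrightarrow> z' u = z u"
  shows "bad n z' S = bad n z S"
proof
  show "bad n z' S \<subseteq> bad n z S" by (rule bad_mono[OF assms]) (simp add: reach_self)
next
  have "\<forall>u. u \<notin> S \<longrightarrow> z u = z' u" using assms by simp
  thus "bad n z S \<subseteq> bad n z' S" by (rule bad_mono) (simp add: reach_self)
qed

lemma acyc:
  assumes y0: "y0 \<in> P" "g y0 = S" "\<forall>v\<in>N. reach y0 S v" and s0: "s0 \<in> S"
    and z: "z \<in> P" "\<forall>v\<in>N. reach z S v"
  shows "g z = S"
proof -
  have SN: "S \<subseteq> N" using g_sub[OF y0(1)] y0(2) by simp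
  have s0N: "s0 \<in> N" using s0 SN by blast
  define can where "can = (\<lambda>z u. if u \<in> N - S then s0 else z u)"
  have canP: "\<And>z. z \<in> P \<Longrightarrow> can z \<in> P"
  proof -
    fix z assume z: "z \<in> P"
    show "can z \<in> P"
    proof (rule prof_intro)
      fix u assume "u \<in> N"
      thus "can z u \<in> N \<and> can z u \<noteq> u" using prof_val[OF z] s0N s0 unfolding can_def by auto
    next
      fix u assume "u \<notin> N"
      thus "can z u = undefined" using prof_out[OF z] unfolding can_def by auto
    qed
  qed
  have key: "\<forall>z. z \<in> P \<longrightarrow> (\<forall>v\<in>N. reach z S v) \<longrightarrow> card {u \<in> N - S. z u \<noteq> s0} = k \<longrightarrow> (g z = S \<longleftrightarrow> g (can z) = S)" for k
  proof (induction k)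
    case 0
    show ?case
    proof (intro allI impI)
      fix z assume z: "z \<in> P" and r: "\<forall>v\<in>N. reach z S v" and c: "card {u \<in> N - S. z u \<noteq> s0} = 0"
      have "{u \<in> N - S. z u \<noteq> s0} = {}" using c finN by simp
      hence "can z = z" unfolding can_def by (intro ext) auto
      thus "g z = S \<longleftrightarrow> g (can z) = S" by simp
    qed
  next
    case (Suc k)
    show ?case
    proof (intro allI impI)
      fix z assume z: "z \<in> P" and r: "\<forall>v\<in>N. reach z S v" and c: "card {u \<in> N - S. z u \<noteq> s0} = Suc k"
      define D where "D = {u \<in> N - S. z u \<noteq> s0}"
      have Dfin: "finite D" unfolding D_def using finN by simp
      have cD: "card D = Suc k" using c unfolding D_def .
      have Dne: "D \<noteq> {}" using cD by auto
      define M where "M = Max (vdist z S ` D)"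
      have "M \<in> vdist z S ` D" unfolding M_def using Dfin Dne by (intro Max_in) auto
      then obtain v where v: "v \<in> D" "vdist z S v = M" by (metis imageE)
      have vN: "v \<in> N" "v \<notin> S" "z v \<noteq> s0" using v(1) unfolding D_def by auto
      have nov: "\<forall>w\<in>N. z w = v \<longrightarrow> w \<in> S"
      proof (intro ballI impI)
        fix w assume w: "w \<in> N" "z w = v"
        show "w \<in> S"
        proof (rule ccontr)
          assume wS: "w \<notin> S"
          have "v \<noteq> s0" using vN s0 by auto
          hence wD: "w \<in> D" unfolding D_def using w wS by simp
          have "vdist z S w = Suc (vdist z S (z w))" using vdist_Suc r w(1) wS by blast
          hence "vdist z S w = Suc M" using w(2) v(2) by simp
          moreover have "vdist z S w \<le> M" unfolding M_def using Dfin wD by simp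
          ultimately show False by simp
        qed
      qed
      define z' where "z' = z(v := s0)"
      have z'P: "z' \<in> P" unfolding z'_def using prof_upd[OF z vN(1) s0N] vN(2) s0 by auto
      have rv: "reach z' S v" unfolding reach_def z'_def by (rule exI[of _ 1]) (simp add: s0)
      have r': "\<forall>w\<in>N. reach z' S w"
      proof
        fix w assume "w \<in> N"
        show "reach z' S w"
          by (rule reach_mono[of "{v}"]) (use rv r \<open>w \<in> N\<close> in \<open>auto simp: z'_def\<close>)
      qed
      have "{u \<in> N - S. z' u \<noteq> s0} = D - {v}" unfolding D_def z'_def by auto
      hence c': "card {u \<in> N - S. z' u \<noteq> s0} = k" using c v(1) Dfin unfolding D_def by (simp add: card_Diff_singleton)
      have canz: "can z' = can z" unfolding can_def z'_def using vN by (intro ext) auto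
      have ih: "g z' = S \<longleftrightarrow> g (can z) = S" using Suc.IH z'P r' c' canz by metis
      have "g z = S \<longleftrightarrow> g z' = S"
      proof
        assume "g z = S"
        thus "g z' = S" unfolding z'_def using LemE[OF z _ vN(1) vN(2) nov s0N] vN s0 by auto
      next
        assume gz': "g z' = S"
        have nov': "\<forall>w\<in>N. z' w = v \<longrightarrow> w \<in> S"
        proof (intro ballI impI)
          fix w assume "w \<in> N" "z' w = v"
          moreover hence "w \<noteq> v" unfolding z'_def using vN s0 by auto
          ultimately show "w \<in> S" using nov unfolding z'_def by auto
        qed
        have "g (z'(v := z v)) = S" using LemE[OF z'P gz' vN(1) vN(2) nov'] prof_val[OF z vN(1)] by blast
        moreover have "z'(v := z v) = z" unfolding z'_def by simp
        ultimately show "g z = S" by simp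
      qed
      thus "g z = S \<longleftrightarrow> g (can z) = S" using ih by simp
    qed
  qed
  have g0: "g (can y0) = S" using key y0 by blast
  have "g (can z) = S"
  proof -
    have "g (can z) = g (can y0)"
    proof (rule L0[OF canP[OF y0(1)] canP[OF z(1)]])
      fix u assume "u \<notin> g (can y0)"
      hence "u \<notin> S" using g0 by simp
      thus "can z u = can y0 u" unfolding can_def using prof_out[OF z(1)] prof_out[OF y0(1)] by auto
    qed
    thus ?thesis using g0 by simp
  qed
  thus ?thesis using key z by blast
qed

end


context SM
begin

lemma C1:
  assumes z: "z \<in> P" and SN: "Ss \<subseteq> N" and s0: "s0 \<in> Ss" and C: "g z = C" "\<not> C \<subseteq> Ss"
    and v: "v \<in> bad n z Ss" and nv: "\<forall>w\<in>Ss - C. z w \<noteq> v"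
    and IH: "\<forall>z'\<in>P. card (bad n z' Ss) < card (bad n z Ss) \<longrightarrow> g z' = Ss"
  shows False
proof -
  have vN: "v \<in> N" using v bad_sub by blast
  have vS: "v \<notin> Ss" using bad_notin[OF v] .
  have s0N: "s0 \<in> N" using s0 SN by blast
  have CN: "C \<subseteq> N" using g_sub[OF z] C(1) by simp
  have vC: "v \<notin> C"
  proof
    assume vC: "v \<in> C"
    define z1 where "z1 = z(v := s0)"
    have z1P: "z1 \<in> P" unfolding z1_def using prof_upd[OF z vN s0N] vS s0 by auto
    have gz1: "g z1 = C" unfolding z1_def using strong[OF z] vC C(1) s0N vS s0 by auto
    have "reach z1 Ss v" unfolding reach_def z1_def by (rule exI[of _ 1]) (simp add: s0)
    hence "card (bad n z1 Ss) < card (bad n z Ss)"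
      by (intro bad_less[of "{v}" z1 z Ss v]) (auto simp: z1_def v)
    hence "g z1 = Ss" using IH z1P by blast
    thus False using gz1 C(2) by simp
  qed
  obtain c1 where c1: "c1 \<in> C" "c1 \<notin> Ss" using C(2) by blast
  have c1N: "c1 \<in> N" using c1 CN by blast
  define p where "p = (\<lambda>u. if u \<in> C then (if u \<in> Ss then c1 else v) else z u)"
  have pP: "p \<in> P"
  proof (rule prof_intro)
    fix u assume u: "u \<in> N"
    show "p u \<in> N \<and> p u \<noteq> u"
    proof (cases "u \<in> C")
      case True
      thus ?thesis using c1 c1N vN vC unfolding p_def by auto
    next
      case False thus ?thesis using prof_val[OF z u] unfolding p_def by simp
    qed
  next
    fix u assume "u \<notin> N"
    hence "u \<notin> C" using CN by blast
    thus "p u = undefined" using prof_out[OF z \<open>u \<notin> N\<close>] unfolding p_def by simp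
  qed
  have gp: "g p = C" using L0[OF z pP] C(1) unfolding p_def by auto
  have Wp: "W_set n (g p) p = {v}"
  proof
    show "W_set n (g p) p \<subseteq> {v}"
    proof
      fix w assume "w \<in> W_set n (g p) p"
      hence w: "w \<notin> C" "\<exists>u\<in>C. p u = w" using gp by (simp_all add: W_set_def)
      then obtain u where u: "u \<in> C" "p u = w" by blast
      show "w \<in> {v}"
      proof (cases "u \<in> Ss")
        case True hence "w = c1" using u unfolding p_def by simp
        thus ?thesis using w(1) c1(1) by simp
      next
        case False thus ?thesis using u unfolding p_def by simp
      qed
    qed
  next
    have "p c1 = v" using c1 unfolding p_def by simp
    thus "{v} \<subseteq> W_set n (g p) p" using gp vN vC c1(1) unfolding W_set_def by blast
  qed
  have s0v: "s0 \<noteq> v" using s0 vS by auto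
  have F: "v \<in> W_set n (g (p(v:=s0))) (p(v:=s0))" using Force[OF pP Wp s0N s0v] .
  define q where "q = p(v := s0)"
  have qP: "q \<in> P" unfolding q_def using prof_upd[OF pP vN s0N s0v] .
  have rq: "\<forall>x\<in>insert v C. reach q Ss x"
  proof
    fix x assume x: "x \<in> insert v C"
    have rv: "reach q Ss v" unfolding reach_def q_def by (rule exI[of _ 1]) (simp add: s0)
    show "reach q Ss x"
    proof (cases "x = v")
      case True thus ?thesis using rv by simp
    next
      case False
      hence xC: "x \<in> C" using x by simp
      show ?thesis
      proof (cases "x \<in> Ss")
        case True thus ?thesis by (rule reach_self)
      next
        case False
        hence "q x = v" unfolding q_def p_def using xC \<open>x \<noteq> v\<close> by simp
        thus ?thesis using rv reach_step[of q Ss x] by simp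
      qed
    qed
  qed
  have agq: "\<forall>u. u \<notin> insert v C \<longrightarrow> q u = z u" unfolding q_def p_def by simp
  have "card (bad n q Ss) < card (bad n z Ss)" using bad_less[OF agq rq _ v] by simp
  hence gq: "g q = Ss" using IH qP by blast
  obtain u where u: "u \<in> Ss" "q u = v" using F gq unfolding W_set_def q_def by auto
  have "u \<noteq> v" using u(1) vS by auto
  hence pu: "p u = v" using u(2) unfolding q_def by simp
  show False
  proof (cases "u \<in> C")
    case True thus False using pu u(1) c1(1) vC unfolding p_def by auto
  next
    case False thus False using pu u(1) nv unfolding p_def by auto
  qed
qed

lemma step:
  assumes z: "z \<in> P" and SN: "Ss \<subseteq> N" and s0: "s0 \<in> Ss"
    and IH: "\<forall>z'\<in>P. card (bad n z' Ss) < card (bad n z Ss) \<longrightarrow> g z' = Ss"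
    and bz: "bad n z Ss \<noteq> {}"
  shows "g z = Ss"
proof (rule ccontr)
  assume gz: "g z \<noteq> Ss"
  obtain v1 where v1: "v1 \<in> bad n z Ss" using bz by blast
  have v1N: "v1 \<in> N" using v1 bad_sub by blast
  have v1S: "v1 \<notin> Ss" using bad_notin[OF v1] .
  have s0N: "s0 \<in> N" using s0 SN by blast
  define v' where "v' = z v1"
  have v': "v' \<in> bad n z Ss" "v' \<noteq> v1" using bad_closed[OF z v1] unfolding v'_def by auto
  have v'S: "v' \<notin> Ss" using bad_notin[OF v'(1)] .
  have zv1: "z v1 \<in> N" "z v1 \<noteq> v1" using prof_val[OF z v1N] by auto
  define x where "x = z(v1 := s0)"
  have xP: "x \<in> P" unfolding x_def using prof_upd[OF z v1N s0N] v1S s0 by auto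
  have "reach x Ss v1" unfolding reach_def x_def by (rule exI[of _ 1]) (simp add: s0)
  hence "card (bad n x Ss) < card (bad n z Ss)"
    by (intro bad_less[of "{v1}" x z Ss v1]) (auto simp: x_def v1)
  hence gx: "g x = Ss" using IH xP by blast
  define y where "y = (\<lambda>s. (des Ss x v1 s)(v1 := z v1))"
  have DLs: "\<And>s. s \<in> Ss \<Longrightarrow> y s \<in> P \<and> v1 \<notin> g (y s) \<and> (\<exists>u\<in>g (y s). y s u = v1)"
    unfolding y_def using DL[OF xP gx v1N v1S zv1] by blast
  have agz: "\<And>s. \<forall>u. u \<notin> Ss \<longrightarrow> y s u = z u" unfolding y_def des_def x_def by simp
  have bady: "\<And>s. bad n (y s) Ss = bad n z Ss" using bad_eq agz by blast
  show False
  proof (cases "\<exists>s\<in>Ss. \<not> g (y s) \<subseteq> Ss")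
    case True
    then obtain s where s: "s \<in> Ss" "\<not> g (y s) \<subseteq> Ss" by blast
    have nv: "\<forall>w\<in>Ss - g (y s). y s w \<noteq> v'"
    proof
      fix w assume w: "w \<in> Ss - g (y s)"
      have wv1: "w \<noteq> v1" using w v1S by auto
      show "y s w \<noteq> v'"
      proof (cases "w = s")
        case True
        hence "y s w = v1" using w wv1 unfolding y_def des_def by simp
        thus ?thesis using v'(2) by simp
      next
        case False
        hence "y s w = iota Ss w" using w wv1 unfolding y_def des_def by simp
        moreover have "iota Ss w \<in> Ss" using iota[of w Ss s] w s(1) False by auto
        ultimately show ?thesis using v'S by auto
      qed
    qed
    show False
      by (rule C1[OF _ SN s0 refl s(2) _ nv]) (use DLs[OF s(1)] bady v'(1) IH in auto)
  next
    case False
    hence sub: "\<And>s. s \<in> Ss \<Longrightarrow> g (y s) \<subseteq> Ss" by blast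
    have sin: "\<And>s. s \<in> Ss \<Longrightarrow> s \<in> g (y s)"
    proof -
      fix s assume s: "s \<in> Ss"
      obtain u where u: "u \<in> g (y s)" "y s u = v1" using DLs[OF s] by blast
      have "u \<in> Ss" using u(1) sub[OF s] by blast
      hence "u = s" using des_vote[OF u(2)[unfolded y_def] zv1(2) v1S s] by blast
      thus "s \<in> g (y s)" using u(1) by simp
    qed
    have eq: "\<And>s s'. s \<in> Ss \<Longrightarrow> s' \<in> Ss \<Longrightarrow> g (y s) = g (y s')"
    proof -
      fix s s' assume s: "s \<in> Ss" and s': "s' \<in> Ss"
      show "g (y s) = g (y s')"
      proof (rule L1)
        show "y s \<in> P" using DLs[OF s] by blast
        show "y s' \<in> P" using DLs[OF s'] by blast
      next
        fix u assume "u \<notin> g (y s)" "u \<notin> g (y s')"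
        hence "u \<noteq> s" "u \<noteq> s'" using sin s s' by auto
        thus "y s u = y s' u" unfolding y_def by (rule des_agree)
      qed
    qed
    have T: "g (y s0) = Ss" using sub[OF s0] sin eq s0 by blast
    have "g z = g (y s0)"
    proof (rule L0)
      show "y s0 \<in> P" using DLs[OF s0] by blast
      show "z \<in> P" by (rule z)
    next
      fix u assume "u \<notin> g (y s0)"
      thus "z u = y s0 u" using agz T by simp
    qed
    thus False using T gz by simp
  qed
qed

lemma main_all:
  assumes y0: "y0 \<in> P" "\<forall>v\<in>N. reach y0 (g y0) v"
  shows "\<forall>z\<in>P. g z = g y0"
proof -
  define Ss where "Ss = g y0"
  have SN: "Ss \<subseteq> N" unfolding Ss_def using g_sub[OF y0(1)] .
  obtain s0 where s0: "s0 \<in> Ss" unfolding Ss_def using g_ne[OF y0(1)] by blast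
  have "\<forall>z\<in>P. card (bad n z Ss) = m \<longrightarrow> g z = Ss" for m
  proof (induction m rule: less_induct)
    case (less m)
    show ?case
    proof (intro ballI impI)
      fix z assume z: "z \<in> P" and cz: "card (bad n z Ss) = m"
      have IH: "\<forall>z'\<in>P. card (bad n z' Ss) < card (bad n z Ss) \<longrightarrow> g z' = Ss" using less cz by blast
      show "g z = Ss"
      proof (cases "bad n z Ss = {}")
        case True
        hence "\<forall>v\<in>N. reach z Ss v" unfolding bad_def by blast
        thus ?thesis using acyc[OF y0(1) Ss_def[symmetric] _ s0 z] y0(2) unfolding Ss_def by blast
      next
        case False
        thus ?thesis using step[OF z SN s0 IH] by blast
      qed
    qed
  qed
  thus ?thesis unfolding Ss_def by blast
qed

end

definition cyc :: "nat \<Rightarrow> nat \<Rightarrow> nat" where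
  "cyc n = (\<lambda>u. if u \<in> voters n then (if u = n then 1 else Suc u) else undefined)"

lemma cyc_iter: "1 \<le> v \<Longrightarrow> v + k \<le> n \<Longrightarrow> (cyc n ^^ k) v = v + k"
proof (induction k)
  case 0 thus ?case by simp
next
  case (Suc k)
  hence h: "(cyc n ^^ k) v = v + k" by simp
  have "v + k \<in> voters n" "v + k \<noteq> n" using Suc.prems unfolding voters_def by auto
  hence "cyc n (v + k) = Suc (v + k)" unfolding cyc_def by simp
  thus ?case using h by simp
qed

lemma cyc_reach:
  assumes n: "2 \<le> n" and v: "v \<in> voters n" and s: "s \<in> voters n"
  shows "\<exists>k. (cyc n ^^ k) v = s"
proof (cases "v \<le> s")
  case True
  have "(cyc n ^^ (s - v)) v = v + (s - v)" using v s True by (intro cyc_iter) (auto simp: voters_def)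
  thus ?thesis using True by auto
next
  case False
  have a: "(cyc n ^^ (n - v)) v = n" using v cyc_iter[of v "n - v" n] by (auto simp: voters_def)
  have b: "cyc n n = 1" using n unfolding cyc_def voters_def by simp
  have c: "(cyc n ^^ (s - 1)) 1 = s" using s cyc_iter[of 1 "s - 1" n] by (auto simp: voters_def)
  have "(cyc n ^^ ((s - 1) + Suc (n - v))) v = (cyc n ^^ (s - 1)) ((cyc n ^^ Suc (n - v)) v)"
    by (simp only: funpow_add comp_apply)
  also have "(cyc n ^^ Suc (n - v)) v = 1" using a b by simp
  finally show ?thesis using c by metis
qed

theorem mainTheorem3:
  fixes n :: nat
    and g :: "(nat \<Rightarrow> nat) \<Rightarrow> nat set"
    and f :: "(nat \<Rightarrow> nat) \<Rightarrow> nat option pmf"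
  assumes "sample_mechanism n g f"
    and "strong_sample n g"
    and "impartial n f"
  shows "\<exists>S. \<forall>x\<in>profiles n. g x = S"
proof -
  interpret SM n g f using assms by unfold_locales
  show ?thesis
  proof (cases "2 \<le> n")
    case True
    have cP: "cyc n \<in> profiles n"
    proof (rule prof_intro)
      fix u assume "u \<in> voters n"
      thus "cyc n u \<in> voters n \<and> cyc n u \<noteq> u" using True unfolding cyc_def voters_def by auto
    next
      fix u assume "u \<notin> voters n"
      thus "cyc n u = undefined" unfolding cyc_def by simp
    qed
    obtain s where s: "s \<in> g (cyc n)" using g_ne[OF cP] by blast
    have sN: "s \<in> voters n" using s g_sub[OF cP] by blast
    have "\<forall>v\<in>voters n. reach (cyc n) (g (cyc n)) v"
    proof
      fix v assume "v \<in> voters n"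
      then obtain k where "(cyc n ^^ k) v = s" using cyc_reach[OF True _ sN] by blast
      thus "reach (cyc n) (g (cyc n)) v" unfolding reach_def using s by metis
    qed
    thus ?thesis using main_all[OF cP] by blast
  next
    case False
    hence "n = 0 \<or> n = 1" by auto
    thus ?thesis
    proof
      assume n0: "n = 0"
      have "\<forall>x\<in>profiles n. x = (\<lambda>_. undefined)"
      proof
        fix x assume x: "x \<in> profiles n"
        show "x = (\<lambda>_. undefined)"
        proof (rule ext)
          fix u have "u \<notin> voters n" using n0 unfolding voters_def by simp
          thus "x u = undefined" using prof_out[OF x] by simp
        qed
      qed
      thus ?thesis by (metis)
    next
      assume n1: "n = 1"
      have "\<forall>x\<in>profiles n. False"
      proof
        fix x assume x: "x \<in> profiles n"
        have "1 \<in> voters n" using n1 unfolding voters_def by simp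
        hence "x 1 \<in> voters n \<and> x 1 \<noteq> 1" using prof_val[OF x] by blast
        thus False using n1 unfolding voters_def by auto
      qed
      thus ?thesis by blast
    qed
  qed
qed

end
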